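(* A closed term graph $G$ is in normal form with respect to the constructor graph rewrite system corresponding to a constructor rewrite system $R$ if and only if the term $\mathcal{T}(G)$ is in normal form with respect to $R$.
   Context: A constructor rewrite system $R$ over a signature $\Sigma$ (symbols are constructors or function symbols, with arities) consists of rules $\mathbf{f}(p_1,\dots,p_n)\rightarrow t$ with $\mathbf{f}$ a function symbol, $p_i$ patterns (constructors and variables), assumed orthogonal; rewriting is call-by-value (a step replaces anywhere a subterm $l\sigma$ by $r\sigma$, $\sigma$ mapping variables to closed terms built only from constructors). A labelled graph is $(V,\alpha,\delta)$: finite $V$, ordered successor lists $\alpha:V\to V^*$, partial labelling $\delta:V\rightharpoonup\Sigma$ with the number of successors equal to the arity of the label (0 if unlabelled), acyclic; closed if $\delta$ is total; a term graph additionally has a root. Homomorphisms preserve labels and successor lists of labelled vertices (and root). A constructor path has all vertices labelled by constructors; a left path has first vertex labelled by a function symbol and the others by constructors or unlabelled. A graph rewrite rule $(H,r,s)$ has every path from $r$ a left path. A redex in $G$: a rule with a homomorphism $\varphi:H|_r\to G$ ($H|_r$ = vertices reachable from $r$) such that every path from $\varphi(v)$, $v$ unlabelled in $H|_r$, is a constructor path. A term graph is in normal form if it has no redex. $\mathcal{T}(G)$ is the term obtained by unfolding $G$ from its root. A term rule $l\rightarrow r$ corresponds to the graph rule obtained from the disjoint union of the trees of $l$ and $r$ by identifying vertices of the same variable, left root = root of $l$, right root = root of $r$; the constructor graph rewrite system corresponding to $R$ is the set of these graph rules. *)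

theory Defs
  imports Main
begin

text \<open>A signature is given by an arity function and a predicate telling which
symbols are constructors; the other symbols are function symbols.\<close>

datatype ('f, 'v) trm = Var 'v | Fun 'f "('f, 'v) trm list"

fun wf_term :: "('f \<Rightarrow> nat) \<Rightarrow> ('f, 'v) trm \<Rightarrow> bool" where
  "wf_term arity (Var x) = True"
| "wf_term arity (Fun f ts) = (length ts = arity f \<and> list_all (wf_term arity) ts)"

fun vars :: "('f, 'v) trm \<Rightarrow> 'v set" where
  "vars (Var x) = {x}"
| "vars (Fun f ts) = \<Union> (set (map vars ts))"

fun var_list :: "('f, 'v) trm \<Rightarrow> 'v list" where
  "var_list (Var x) = [x]"
| "var_list (Fun f ts) = concat (map var_list ts)"

fun subst :: "('v \<Rightarrow> ('f, 'w) trm) \<Rightarrow> ('f, 'v) trm \<Rightarrow> ('f, 'w) trm" where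
  "subst \<sigma> (Var x) = \<sigma> x"
| "subst \<sigma> (Fun f ts) = Fun f (map (subst \<sigma>) ts)"

fun subterms :: "('f, 'v) trm \<Rightarrow> ('f, 'v) trm set" where
  "subterms (Var x) = {Var x}"
| "subterms (Fun f ts) = insert (Fun f ts) (\<Union> (set (map subterms ts)))"

fun is_pattern :: "('f \<Rightarrow> bool) \<Rightarrow> ('f, 'v) trm \<Rightarrow> bool" where
  "is_pattern is_con (Var x) = True"
| "is_pattern is_con (Fun f ts) = (is_con f \<and> list_all (is_pattern is_con) ts)"

fun is_cterm :: "('f \<Rightarrow> nat) \<Rightarrow> ('f \<Rightarrow> bool) \<Rightarrow> ('f, 'v) trm \<Rightarrow> bool" where
  "is_cterm arity is_con (Var x) = False"
| "is_cterm arity is_con (Fun f ts) =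
     (is_con f \<and> length ts = arity f \<and> list_all (is_cterm arity is_con) ts)"

definition constructor_rule ::
  "('f \<Rightarrow> nat) \<Rightarrow> ('f \<Rightarrow> bool) \<Rightarrow> ('f, 'v) trm \<times> ('f, 'v) trm \<Rightarrow> bool" where
  "constructor_rule arity is_con lr \<longleftrightarrow>
     (\<exists>f ps. fst lr = Fun f ps \<and> \<not> is_con f \<and> list_all (is_pattern is_con) ps)
     \<and> wf_term arity (fst lr) \<and> wf_term arity (snd lr)"

definition constructor_trs ::
  "('f \<Rightarrow> nat) \<Rightarrow> ('f \<Rightarrow> bool) \<Rightarrow> (('f, 'v) trm \<times> ('f, 'v) trm) set \<Rightarrow> bool" where
  "constructor_trs arity is_con R \<longleftrightarrow> (\<forall>lr \<in> R. constructor_rule arity is_con lr)"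

text \<open>Orthogonality: left-linear and non-overlapping.  For constructor systems
the only possible overlaps are root overlaps between distinct rules
(left-hand sides renamed apart).\<close>
definition orthogonal :: "(('f, 'v) trm \<times> ('f, 'v) trm) set \<Rightarrow> bool" where
  "orthogonal R \<longleftrightarrow>
     (\<forall>(l, r) \<in> R. distinct (var_list l)) \<and>
     (\<forall>(l1, r1) \<in> R. \<forall>(l2, r2) \<in> R. (l1, r1) \<noteq> (l2, r2) \<longrightarrow>
        \<not> (\<exists>(\<sigma> :: 'v \<Rightarrow> ('f, 'v) trm) \<tau>. subst \<sigma> l1 = subst \<tau> l2))"

text \<open>Call-by-value redex: an instance l\<sigma> of a left-hand side, with \<sigma> mapping
the variables (of l) to closed constructor terms.\<close>
definition term_redex ::
  "('f \<Rightarrow> nat) \<Rightarrow> ('f \<Rightarrow> bool) \<Rightarrow> (('f, 'v) trm \<times> ('f, 'v) trm) set \<Rightarrow> ('f, 'v) trm \<Rightarrow> bool" where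
  "term_redex arity is_con R s \<longleftrightarrow>
     (\<exists>(l, r) \<in> R. \<exists>\<sigma>. (\<forall>x \<in> vars l. is_cterm arity is_con (\<sigma> x)) \<and> s = subst \<sigma> l)"

definition term_nf ::
  "('f \<Rightarrow> nat) \<Rightarrow> ('f \<Rightarrow> bool) \<Rightarrow> (('f, 'v) trm \<times> ('f, 'v) trm) set \<Rightarrow> ('f, 'v) trm \<Rightarrow> bool" where
  "term_nf arity is_con R t \<longleftrightarrow> (\<forall>s \<in> subterms t. \<not> term_redex arity is_con R s)"

record ('n, 'f) lgraph =
  verts :: "'n set"
  succs :: "'n \<Rightarrow> 'n list"
  lab :: "'n \<Rightarrow> 'f option"

record ('n, 'f) tgraph = "('n, 'f) lgraph" +
  root :: 'n

definition edges :: "('n, 'f, 'z) lgraph_scheme \<Rightarrow> ('n \<times> 'n) set" where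
  "edges G = {(u, w). u \<in> verts G \<and> w \<in> set (succs G u)}"

definition wf_lgraph :: "('f \<Rightarrow> nat) \<Rightarrow> ('n, 'f, 'z) lgraph_scheme \<Rightarrow> bool" where
  "wf_lgraph arity G \<longleftrightarrow>
     finite (verts G) \<and>
     (\<forall>v \<in> verts G. set (succs G v) \<subseteq> verts G \<and>
        length (succs G v) = (case lab G v of Some f \<Rightarrow> arity f | None \<Rightarrow> 0)) \<and>
     acyclic (edges G)"

definition closed_graph :: "('n, 'f, 'z) lgraph_scheme \<Rightarrow> bool" where
  "closed_graph G \<longleftrightarrow> (\<forall>v \<in> verts G. lab G v \<noteq> None)"

definition term_graph :: "('f \<Rightarrow> nat) \<Rightarrow> ('n, 'f) tgraph \<Rightarrow> bool" where
  "term_graph arity G \<longleftrightarrow>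
     wf_lgraph arity G \<and> root G \<in> verts G \<and> (\<forall>v \<in> verts G. (root G, v) \<in> (edges G)\<^sup>*)"

definition is_path :: "('n, 'f, 'z) lgraph_scheme \<Rightarrow> 'n list \<Rightarrow> bool" where
  "is_path G vs \<longleftrightarrow> vs \<noteq> [] \<and> set vs \<subseteq> verts G \<and>
     (\<forall>i. Suc i < length vs \<longrightarrow> vs ! Suc i \<in> set (succs G (vs ! i)))"

definition constructor_path :: "('f \<Rightarrow> bool) \<Rightarrow> ('n, 'f, 'z) lgraph_scheme \<Rightarrow> 'n list \<Rightarrow> bool" where
  "constructor_path is_con G vs \<longleftrightarrow> (\<forall>w \<in> set vs. \<exists>c. lab G w = Some c \<and> is_con c)"

definition restrict :: "('n, 'f, 'z) lgraph_scheme \<Rightarrow> 'n \<Rightarrow> ('n, 'f, 'z) lgraph_scheme" where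
  "restrict H r = H\<lparr>verts := {v \<in> verts H. (r, v) \<in> (edges H)\<^sup>*}\<rparr>"

definition is_hom :: "('m, 'f, 'y) lgraph_scheme \<Rightarrow> ('n, 'f, 'z) lgraph_scheme \<Rightarrow> ('m \<Rightarrow> 'n) \<Rightarrow> bool" where
  "is_hom H G \<phi> \<longleftrightarrow>
     (\<forall>v \<in> verts H. \<phi> v \<in> verts G) \<and>
     (\<forall>v \<in> verts H. lab H v \<noteq> None \<longrightarrow>
        lab G (\<phi> v) = lab H v \<and> succs G (\<phi> v) = map \<phi> (succs H v))"

text \<open>Graph rewrite rules are triples (H, left root, right root).\<close>
definition graph_redex ::
  "('f \<Rightarrow> bool) \<Rightarrow> (('m, 'f) lgraph \<times> 'm \<times> 'm) set \<Rightarrow> ('n, 'f, 'z) lgraph_scheme \<Rightarrow> bool" where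
  "graph_redex is_con GRS G \<longleftrightarrow>
     (\<exists>(H, l, r) \<in> GRS. \<exists>\<phi>. is_hom (restrict H l) G \<phi> \<and>
        (\<forall>v \<in> verts (restrict H l). lab H v = None \<longrightarrow>
           (\<forall>vs. is_path G vs \<and> hd vs = \<phi> v \<longrightarrow> constructor_path is_con G vs)))"

definition graph_nf ::
  "('f \<Rightarrow> bool) \<Rightarrow> (('m, 'f) lgraph \<times> 'm \<times> 'm) set \<Rightarrow> ('n, 'f, 'z) lgraph_scheme \<Rightarrow> bool" where
  "graph_nf is_con GRS G \<longleftrightarrow> \<not> graph_redex is_con GRS G"

text \<open>Unfolding with fuel; for an acyclic graph with n vertices fuel n suffices,
since every path has at most n vertices.\<close>
fun unfold_fuel :: "('n, 'f, 'z) lgraph_scheme \<Rightarrow> nat \<Rightarrow> 'n \<Rightarrow> ('f, 'v) trm" where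
  "unfold_fuel G 0 v = undefined"
| "unfold_fuel G (Suc k) v =
     (case lab G v of Some f \<Rightarrow> Fun f (map (unfold_fuel G k) (succs G v)) | None \<Rightarrow> undefined)"

definition term_of :: "('n, 'f) tgraph \<Rightarrow> ('f, 'v) trm" where
  "term_of G = unfold_fuel G (card (verts G)) (root G)"

fun subt_at :: "('f, 'v) trm \<Rightarrow> nat list \<Rightarrow> ('f, 'v) trm" where
  "subt_at t [] = t"
| "subt_at (Var x) (i # p) = Var x"
| "subt_at (Fun f ts) (i # p) = subt_at (ts ! i) p"

fun is_pos :: "('f, 'v) trm \<Rightarrow> nat list \<Rightarrow> bool" where
  "is_pos t [] = True"
| "is_pos (Var x) (i # p) = False"
| "is_pos (Fun f ts) (i # p) = (i < length ts \<and> is_pos (ts ! i) p)"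

text \<open>Vertices of the rule graph: a variable x is the single vertex Inl x (so
occurrences of the same variable are identified); a non-variable position p
of the left (b = True) resp. right (b = False) side is the vertex Inr (b, p).\<close>
definition node :: "bool \<Rightarrow> ('f, 'v) trm \<Rightarrow> nat list \<Rightarrow> 'v + bool \<times> nat list" where
  "node b t p = (case subt_at t p of Var x \<Rightarrow> Inl x | Fun f ts \<Rightarrow> Inr (b, p))"

definition rule_graph :: "('f, 'v) trm \<Rightarrow> ('f, 'v) trm \<Rightarrow> ('v + bool \<times> nat list, 'f) lgraph" where
  "rule_graph l r =
     (let side = (\<lambda>b. if b then l else r);
          V = {node True l p | p. is_pos l p} \<union> {node False r p | p. is_pos r p}
      in \<lparr> verts = V,
           succs = (\<lambda>v. case v of Inl x \<Rightarrow> []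
                      | Inr (b, p) \<Rightarrow> (case subt_at (side b) p of Var x \<Rightarrow> []
                          | Fun f ts \<Rightarrow> map (\<lambda>i. node b (side b) (p @ [i])) [0..<length ts])),
           lab = (\<lambda>v. if v \<notin> V then None else
                      (case v of Inl x \<Rightarrow> None
                      | Inr (b, p) \<Rightarrow> (case subt_at (side b) p of Var x \<Rightarrow> None
                          | Fun f ts \<Rightarrow> Some f))) \<rparr>)"

definition graph_rule_of :: "('f, 'v) trm \<times> ('f, 'v) trm \<Rightarrow>
    ('v + bool \<times> nat list, 'f) lgraph \<times> ('v + bool \<times> nat list) \<times> ('v + bool \<times> nat list)" where
  "graph_rule_of lr = (rule_graph (fst lr) (snd lr), node True (fst lr) [], node False (snd lr) [])"

definition crs_to_grs :: "(('f, 'v) trm \<times> ('f, 'v) trm) set \<Rightarrow>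
    (('v + bool \<times> nat list, 'f) lgraph \<times> ('v + bool \<times> nat list) \<times> ('v + bool \<times> nat list)) set" where
  "crs_to_grs R = graph_rule_of ` R"

end

theory Submission
  imports Defs
begin

lemma subterms_refl[simp]: "t \<in> subterms t" by (cases t) auto

lemma subterms_trans: "s \<in> subterms t \<Longrightarrow> u \<in> subterms s \<Longrightarrow> u \<in> subterms t"
  by (induction t arbitrary: s) auto

lemma cterm_sub: "is_cterm a c t \<Longrightarrow> s \<in> subterms t \<Longrightarrow> is_cterm a c s"
  by (induction t) (auto simp: list_all_iff)

lemma subt_at_Var[simp]: "subt_at (Var x) q = Var x" by (cases q) auto

lemma vars_pos: "x \<in> vars t \<Longrightarrow> \<exists>p. is_pos t p \<and> subt_at t p = Var x"
proof (induction t)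
  case (Var y) then show ?case by (intro exI[of _ "[]"]) auto
next
  case (Fun f ts)
  then obtain i where i: "i < length ts" "x \<in> vars (ts!i)" by (auto simp: in_set_conv_nth)
  then obtain p where "is_pos (ts!i) p \<and> subt_at (ts!i) p = Var x" using Fun.IH nth_mem by blast
  then show ?case using i by (intro exI[of _ "i#p"]) auto
qed

lemma pos_vars: "is_pos t p \<Longrightarrow> subt_at t p = Var x \<Longrightarrow> x \<in> vars t"
  by (induction t p rule: is_pos.induct) (auto dest: nth_mem)

lemma vars_var_list: "vars t = set (var_list t)" by (induction t) auto

lemma distinct_concat_idx:
  "distinct (concat xs) \<Longrightarrow> i < length xs \<Longrightarrow> j < length xs \<Longrightarrow> x \<in> set (xs!i) \<Longrightarrow> x \<in> set (xs!j) \<Longrightarrow> i = j"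
proof (induction xs arbitrary: i j)
  case Nil then show ?case by simp
next
  case (Cons a xs)
  show ?case
  proof (cases i)
    case 0
    show ?thesis
    proof (cases j)
      case (Suc j')
      then have "x \<in> set (concat xs)" using Cons.prems 0 by (auto dest: nth_mem)
      then show ?thesis using Cons.prems 0 by auto
    qed (use 0 in simp)
  next
    case (Suc i')
    show ?thesis
    proof (cases j)
      case 0
      then have "x \<in> set (concat xs)" using Cons.prems Suc by (auto dest: nth_mem)
      then show ?thesis using Cons.prems 0 by auto
    next
      case (Suc j')
      then show ?thesis using Cons.prems Cons.IH[of i' j'] \<open>i = Suc i'\<close> by auto
    qed
  qed
qed

lemma distinct_concat_mem: "distinct (concat xs) \<Longrightarrow> ys \<in> set xs \<Longrightarrow> distinct ys"
  by (induction xs) auto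

lemma var_pos_unique:
  "distinct (var_list t) \<Longrightarrow> is_pos t p \<Longrightarrow> is_pos t q \<Longrightarrow> subt_at t p = Var x \<Longrightarrow> subt_at t q = Var x \<Longrightarrow> p = q"
proof (induction t arbitrary: p q)
  case (Var y) then show ?case by (cases p; cases q) auto
next
  case (Fun f ts)
  obtain i p' where p: "p = i#p'" using Fun.prems(4) by (cases p) auto
  obtain j q' where q: "q = j#q'" using Fun.prems(5) by (cases q) auto
  have i: "i < length ts" "is_pos (ts!i) p'" "subt_at (ts!i) p' = Var x" using Fun.prems(2,4) p by auto
  have j: "j < length ts" "is_pos (ts!j) q'" "subt_at (ts!j) q' = Var x" using Fun.prems(3,5) q by auto
  have xi: "x \<in> set (var_list (ts!i))" using pos_vars[OF i(2,3)] by (simp add: vars_var_list)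
  have xj: "x \<in> set (var_list (ts!j))" using pos_vars[OF j(2,3)] by (simp add: vars_var_list)
  have dc: "distinct (concat (map var_list ts))" using Fun.prems(1) by simp
  have ij: "i = j" using distinct_concat_idx[OF dc, of i j x] i(1) j(1) xi xj by simp
  have "var_list (ts!i) \<in> set (map var_list ts)" using nth_mem[OF i(1)] by simp
  then have "distinct (var_list (ts!i))" using dc distinct_concat_mem by blast
  then have "p' = q'" using Fun.IH[OF nth_mem[OF i(1)]] i j ij by blast
  then show ?case using p q ij by simp
qed

lemma subt_at_append: "subt_at t (p @ q) = subt_at (subt_at t p) q"
  by (induction t p rule: subt_at.induct) auto

lemma is_pos_append: "is_pos t (p @ q) \<longleftrightarrow> is_pos t p \<and> is_pos (subt_at t p) q"
  by (induction t p rule: is_pos.induct) auto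

lemma node_Fun: "subt_at t p = Fun f ts \<Longrightarrow> node b t p = Inr (b,p)" by (simp add: node_def)
lemma node_Var: "subt_at t p = Var x \<Longrightarrow> node b t p = Inl x" by (simp add: node_def)

lemma rg_pos_vert: "is_pos l p \<Longrightarrow> node True l p \<in> verts (rule_graph l r)"
  by (auto simp: rule_graph_def Let_def)

lemma rg_succs_pos: "subt_at l p = Fun f ts \<Longrightarrow>
   succs (rule_graph l r) (node True l p) = map (\<lambda>i. node True l (p@[i])) [0..<length ts]"
  by (simp add: rule_graph_def Let_def node_Fun)

lemma rg_succs_var: "subt_at l p = Var x \<Longrightarrow> succs (rule_graph l r) (node True l p) = []"
  by (simp add: rule_graph_def Let_def node_Var)

lemma rg_lab_pos: "is_pos l p \<Longrightarrow> subt_at l p = Fun f ts \<Longrightarrow> lab (rule_graph l r) (node True l p) = Some f"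
  using rg_pos_vert[of l p r] by (simp add: rule_graph_def Let_def node_Fun)

lemma rg_lab_var: "lab (rule_graph l r) (Inl x) = None"
  by (simp add: rule_graph_def Let_def)

lemma rg_reach_pos:
  assumes "(node True l [], v) \<in> (edges (rule_graph l r))\<^sup>*"
  shows "\<exists>p. is_pos l p \<and> v = node True l p"
  using assms
proof (induction rule: rtrancl_induct)
  case base then show ?case by (intro exI[of _ "[]"]) auto
next
  case (step y z)
  then obtain p where p: "is_pos l p" "y = node True l p" by blast
  have z: "z \<in> set (succs (rule_graph l r) y)" using step(2) by (simp add: edges_def)
  show ?case
  proof (cases "subt_at l p")
    case (Var x) then show ?thesis using z p rg_succs_var by fastforce
  next
    case (Fun f ts)
    then obtain i where i: "i < length ts" "z = node True l (p@[i])" using z p rg_succs_pos[OF Fun] by auto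
    have "is_pos l (p@[i])" using p(1) Fun i by (simp add: is_pos_append)
    then show ?thesis using i by blast
  qed
qed

lemma rg_pos_reach: "is_pos l p \<Longrightarrow> (node True l [], node True l p) \<in> (edges (rule_graph l r))\<^sup>*"
proof (induction p rule: rev_induct)
  case Nil then show ?case by simp
next
  case (snoc i p)
  have pp: "is_pos l p" and ip: "is_pos (subt_at l p) [i]" using snoc.prems by (auto simp: is_pos_append)
  then obtain f ts where F: "subt_at l p = Fun f ts" "i < length ts" by (cases "subt_at l p") auto
  have "(node True l p, node True l (p@[i])) \<in> edges (rule_graph l r)"
    using rg_pos_vert[OF pp] rg_succs_pos[OF F(1)] F(2) by (auto simp: edges_def)
  then show ?case using snoc.IH[OF pp] by (rule rtrancl_into_rtrancl[rotated])
qed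

definition dep :: "('n,'f,'z) lgraph_scheme \<Rightarrow> 'n \<Rightarrow> nat" where
  "dep G v = card {w. (v,w) \<in> (edges G)\<^sup>+}"

definition U :: "('n,'f,'z) lgraph_scheme \<Rightarrow> 'n \<Rightarrow> ('f,'v) trm" where
  "U G v = unfold_fuel G (Suc (dep G v)) v"

lemma edges_verts: "(u,w) \<in> edges G \<Longrightarrow> wf_lgraph a G \<Longrightarrow> u \<in> verts G \<and> w \<in> verts G"
  by (auto simp: edges_def wf_lgraph_def)

lemma trancl_verts: "(u,w) \<in> (edges G)\<^sup>+ \<Longrightarrow> wf_lgraph a G \<Longrightarrow> w \<in> verts G"
  by (induction rule: trancl.induct) (auto simp: edges_def wf_lgraph_def)

lemma rtrancl_verts: "(u,w) \<in> (edges G)\<^sup>* \<Longrightarrow> u \<in> verts G \<Longrightarrow> wf_lgraph a G \<Longrightarrow> w \<in> verts G"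
  by (induction rule: rtrancl_induct) (auto simp: edges_def wf_lgraph_def)

lemma dep_fin: assumes wf: "wf_lgraph a G" shows "finite {x. (v,x) \<in> (edges G)\<^sup>+}"
proof (rule finite_subset[of _ "verts G"])
  show "{x. (v,x) \<in> (edges G)\<^sup>+} \<subseteq> verts G" using trancl_verts[OF _ wf] by blast
  show "finite (verts G)" using wf by (simp add: wf_lgraph_def)
qed

lemma dep_less: assumes wf: "wf_lgraph a G" and e: "(v,w) \<in> edges G" shows "dep G w < dep G v"
proof -
  have sub: "{x. (w,x) \<in> (edges G)\<^sup>+} \<subseteq> {x. (v,x) \<in> (edges G)\<^sup>+}" using e by (blast intro: trancl_into_trancl2)
  have ac: "acyclic (edges G)" using wf unfolding wf_lgraph_def by blast
  have "w \<in> {x. (v,x) \<in> (edges G)\<^sup>+}" using e by auto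
  moreover from ac have "w \<notin> {x. (w,x) \<in> (edges G)\<^sup>+}" unfolding acyclic_def by blast
  ultimately have "{x. (w,x) \<in> (edges G)\<^sup>+} \<subset> {x. (v,x) \<in> (edges G)\<^sup>+}" using sub by blast
  then show ?thesis unfolding dep_def by (rule psubset_card_mono[OF dep_fin[OF wf]])
qed

lemma dep_lt_card: assumes wf: "wf_lgraph a G" and v: "v \<in> verts G" shows "dep G v < card (verts G)"
proof -
  have fin: "finite (verts G)" using wf by (simp add: wf_lgraph_def)
  have "{x. (v,x) \<in> (edges G)\<^sup>+} \<subseteq> verts G - {v}"
    using trancl_verts[OF _ wf] wf by (auto simp: wf_lgraph_def acyclic_def)
  then have "dep G v \<le> card (verts G - {v})" unfolding dep_def using fin by (intro card_mono) auto
  also have "\<dots> < card (verts G)" by (rule card_Diff1_less[OF fin v])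
  finally show ?thesis .
qed

lemma fuel_eq: assumes wf: "wf_lgraph a G"
  shows "v \<in> verts G \<Longrightarrow> dep G v < k \<Longrightarrow> dep G v < k' \<Longrightarrow> (unfold_fuel G k v :: ('f,'v) trm) = unfold_fuel G k' v"
proof (induction k arbitrary: k' v)
  case 0 then show ?case by simp
next
  case (Suc k)
  obtain k'' where k': "k' = Suc k''" using Suc.prems(3) by (cases k') auto
  have *: "\<forall>w \<in> set (succs G v). (unfold_fuel G k w :: ('f,'v) trm) = unfold_fuel G k'' w"
  proof
    fix w assume "w \<in> set (succs G v)"
    then have e: "(v,w) \<in> edges G" using Suc.prems(1) by (auto simp: edges_def)
    have w1: "w \<in> verts G" using edges_verts[OF e wf] by simp
    have w2: "dep G w < k" using dep_less[OF wf e] Suc.prems(2) by simp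
    have w3: "dep G w < k''" using dep_less[OF wf e] Suc.prems(3) k' by simp
    show "(unfold_fuel G k w :: ('f,'v) trm) = unfold_fuel G k'' w" by (rule Suc.IH[OF w1 w2 w3])
  qed
  have "map (unfold_fuel G k) (succs G v) = (map (unfold_fuel G k'') (succs G v) :: ('f,'v) trm list)"
    unfolding map_eq_conv using * by blast
  then show ?case using k' by (simp split: option.split)
qed

lemma U_Fun: assumes wf: "wf_lgraph a G" and v: "v \<in> verts G" and l: "lab G v = Some f"
  shows "U G v = Fun f (map (U G) (succs G v))"
proof -
  have "map (unfold_fuel G (dep G v)) (succs G v) = map (U G) (succs G v)"
    unfolding map_eq_conv U_def
  proof
    fix w assume "w \<in> set (succs G v)"
    then have e: "(v,w) \<in> edges G" using v by (auto simp: edges_def)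
    show "unfold_fuel G (dep G v) w = unfold_fuel G (Suc (dep G w)) w"
      by (rule fuel_eq[OF wf]) (use dep_less[OF wf e] edges_verts[OF e wf] in auto)
  qed
  then show ?thesis using l by (simp add: U_def)
qed

lemma term_of_U: assumes tg: "term_graph a G" shows "term_of G = U G (root G)"
proof -
  have wf: "wf_lgraph a G" and r: "root G \<in> verts G" using tg by (auto simp: term_graph_def)
  show ?thesis unfolding term_of_def U_def
    by (rule fuel_eq[OF wf r]) (use dep_lt_card[OF wf r] in auto)
qed

lemma closedD: "closed_graph G \<Longrightarrow> v \<in> verts G \<Longrightarrow> \<exists>f. lab G v = Some f"
  by (auto simp: closed_graph_def)

lemma U_reach_sub: assumes wf: "wf_lgraph a G" and cl: "closed_graph G"
  and r: "(u,w) \<in> (edges G)\<^sup>*" and u: "u \<in> verts G"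
  shows "(U G w :: ('f,'v) trm) \<in> subterms (U G u)"
  using r
proof (induction rule: rtrancl_induct)
  case base then show ?case by simp
next
  case (step y z)
  have y: "y \<in> verts G" using rtrancl_verts[OF step(1) u wf] .
  obtain f where f: "lab G y = Some f" using closedD[OF cl y] by blast
  have z: "z \<in> set (succs G y)" using step(2) by (simp add: edges_def)
  have m: "subterms (U G z :: ('f,'v) trm) \<in> set (map subterms (map (U G) (succs G y)))" using z by simp
  have "(U G z :: ('f,'v) trm) \<in> subterms (U G y)" unfolding U_Fun[OF wf y f] subterms.simps
    using m subterms_refl by blast
  then show ?case using step(3) subterms_trans by blast
qed

lemma sub_U: assumes wf: "wf_lgraph a G" and cl: "closed_graph G"
  shows "s \<in> subterms t \<Longrightarrow> u \<in> verts G \<Longrightarrow> t = U G u \<Longrightarrow> \<exists>w. (u,w) \<in> (edges G)\<^sup>* \<and> s = U G w"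
proof (induction t arbitrary: u)
  case (Var x)
  then have "s = U G u" by (metis singletonD subterms.simps(1))
  then show ?case by (intro exI[of _ u]) auto
next
  case (Fun f ts)
  obtain g where g: "lab G u = Some g" using closedD[OF cl Fun.prems(2)] by blast
  have ts: "Fun f ts = Fun g (map (U G) (succs G u))" using U_Fun[OF wf Fun.prems(2) g] Fun.prems(3) by simp
  from Fun.prems(1) consider "s = Fun f ts" | t' where "t' \<in> set ts" "s \<in> subterms t'" by auto
  then show ?case
  proof cases
    case 1 with Fun.prems show ?thesis by auto
  next
    case 2
    then obtain w where w: "w \<in> set (succs G u)" "t' = U G w" using ts by auto
    have e: "(u,w) \<in> edges G" using w Fun.prems(2) by (auto simp: edges_def)
    have wV: "w \<in> verts G" using edges_verts[OF e wf] by simp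
    obtain w' where w': "(w,w') \<in> (edges G)\<^sup>*" "s = U G w'" using Fun.IH[OF 2(1) 2(2) wV w(2)] by blast
    have "(u,w') \<in> (edges G)\<^sup>*" using e w'(1) by (rule converse_rtrancl_into_rtrancl)
    then show ?thesis using w'(2) by blast
  qed
qed

lemma U_cterm: assumes wf: "wf_lgraph a G" and cl: "closed_graph G"
  shows "v \<in> verts G \<Longrightarrow> (\<forall>w. (v,w) \<in> (edges G)\<^sup>* \<longrightarrow> (\<exists>c. lab G w = Some c \<and> is_con c))
     \<Longrightarrow> is_cterm a is_con (U G v :: ('f,'v) trm)"
proof (induction "dep G v" arbitrary: v rule: less_induct)
  case less
  obtain c where c: "lab G v = Some c" "is_con c" using less.prems(2) by blast
  have len: "length (succs G v) = a c" using wf less.prems(1) c by (auto simp: wf_lgraph_def)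
  have "is_cterm a is_con (U G w :: ('f,'v) trm)" if w: "w \<in> set (succs G v)" for w
  proof -
    have e: "(v,w) \<in> edges G" using w less.prems(1) by (auto simp: edges_def)
    have wV: "w \<in> verts G" using edges_verts[OF e wf] by simp
    have "\<forall>w'. (w,w') \<in> (edges G)\<^sup>* \<longrightarrow> (\<exists>c. lab G w' = Some c \<and> is_con c)"
      using less.prems(2) e by (meson converse_rtrancl_into_rtrancl)
    then show ?thesis using less.hyps[OF dep_less[OF wf e] wV] by blast
  qed
  then have "list_all (is_cterm a is_con) (map (U G) (succs G v) :: ('f,'v) trm list)"
    by (simp add: list_all_iff)
  then show ?case by (simp add: U_Fun[OF wf less.prems(1) c(1)] c len)
qed

lemma path_reach: "is_path G vs \<Longrightarrow> i < length vs \<Longrightarrow> (hd vs, vs!i) \<in> (edges G)\<^sup>*"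
proof (induction i)
  case 0 then show ?case by (simp add: is_path_def hd_conv_nth)
next
  case (Suc i)
  have "(vs!i, vs!Suc i) \<in> edges G"
    using Suc.prems nth_mem[of i vs] by (auto simp: is_path_def edges_def)
  then show ?case using Suc by (meson Suc_lessD rtrancl_into_rtrancl)
qed

lemma path_set_reach: "is_path G vs \<Longrightarrow> w \<in> set vs \<Longrightarrow> (hd vs, w) \<in> (edges G)\<^sup>*"
  by (metis in_set_conv_nth path_reach)

lemma reach_path: assumes wf: "wf_lgraph a G"
  shows "(u,w) \<in> (edges G)\<^sup>* \<Longrightarrow> u \<in> verts G \<Longrightarrow> \<exists>vs. is_path G vs \<and> hd vs = u \<and> last vs = w"
proof (induction rule: rtrancl_induct)
  case base then show ?case by (intro exI[of _ "[u]"]) (auto simp: is_path_def)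
next
  case (step y z)
  then obtain vs where vs: "is_path G vs" "hd vs = u" "last vs = y" by blast
  have yz: "z \<in> set (succs G y)" "z \<in> verts G" using step(2) edges_verts[OF step(2) wf] by (auto simp: edges_def)
  have ne: "vs \<noteq> []" using vs(1) by (simp add: is_path_def)
  have "is_path G (vs @ [z])"
    unfolding is_path_def
  proof (intro conjI allI impI)
    show "vs @ [z] \<noteq> []" by simp
    show "set (vs @ [z]) \<subseteq> verts G" using vs(1) yz by (auto simp: is_path_def)
    fix i assume i: "Suc i < length (vs @ [z])"
    then consider "Suc i < length vs" | "Suc i = length vs" by fastforce
    then show "(vs @ [z]) ! Suc i \<in> set (succs G ((vs @ [z]) ! i))"
    proof cases
      case 1 then show ?thesis using vs(1) by (auto simp: is_path_def nth_append)
    next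
      case 2
      then have "i = length vs - 1" by simp
      then have "(vs @ [z]) ! i = y" using vs(3) ne 2 by (auto simp: nth_append last_conv_nth)
      moreover have "(vs @ [z]) ! Suc i = z" using 2 by (simp add: nth_append)
      ultimately show ?thesis using yz by simp
    qed
  qed
  then show ?case using vs(2) ne by (intro exI[of _ "vs @ [z]"]) auto
qed

section \<open>Graph redex to term redex\<close>

lemma redex_to_term:
  fixes R :: "(('f, 'v) trm \<times> ('f, 'v) trm) set" and G :: "('n,'f,'z) lgraph_scheme"
  assumes wf: "wf_lgraph a G" and cl: "closed_graph G"
    and red: "graph_redex is_con (crs_to_grs R) G"
  shows "\<exists>u \<in> verts G. term_redex a is_con R (U G u :: ('f,'v) trm)"
proof -
  obtain H l0 r0 \<phi> where HR: "(H,l0,r0) \<in> crs_to_grs R" and hom: "is_hom (restrict H l0) G \<phi>"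
    and unl: "\<forall>v \<in> verts (restrict H l0). lab H v = None \<longrightarrow>
           (\<forall>vs. is_path G vs \<and> hd vs = \<phi> v \<longrightarrow> constructor_path is_con G vs)"
    using red unfolding graph_redex_def by blast
  obtain l r where lr: "(l,r) \<in> R" "H = rule_graph l r" "l0 = node True l []"
    using HR by (auto simp: crs_to_grs_def graph_rule_of_def)
  define \<sigma> where "\<sigma> = (\<lambda>x. U G (\<phi> (Inl x)) :: ('f,'v) trm)"
  have rv: "verts (restrict H l0) = {v \<in> verts H. (l0,v) \<in> (edges H)\<^sup>*}" by (simp add: restrict_def)
  have rl: "lab (restrict H l0) = lab H" "succs (restrict H l0) = succs H" by (simp_all add: restrict_def)
  have inR: "node True l p \<in> verts (restrict H l0)" if "is_pos l p" for p
    unfolding lr(2,3) restrict_def using rg_pos_vert[OF that] rg_pos_reach[OF that] by simp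
  have homV: "\<phi> v \<in> verts G" if "v \<in> verts (restrict H l0)" for v
    using hom that unfolding is_hom_def by blast
  have homL: "lab G (\<phi> v) = lab H v \<and> succs G (\<phi> v) = map \<phi> (succs H v)"
    if "v \<in> verts (restrict H l0)" "lab H v \<noteq> None" for v
    using hom that unfolding is_hom_def rl by blast
  have key: "\<forall>p. is_pos l p \<longrightarrow> subt_at l p = t \<longrightarrow> U G (\<phi> (node True l p)) = subst \<sigma> t" for t
  proof (induction t)
    case (Var x) then show ?case by (auto simp: node_Var \<sigma>_def)
  next
    case (Fun f ts)
    show ?case
    proof (intro allI impI)
      fix p assume p: "is_pos l p" "subt_at l p = Fun f ts"
      let ?v = "node True l p"
      have vR: "?v \<in> verts (restrict H l0)" using inR[OF p(1)] .
      have lv: "lab H ?v = Some f" using rg_lab_pos[OF p] lr(2) by simp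
      have h: "lab G (\<phi> ?v) = Some f" "succs G (\<phi> ?v) = map \<phi> (map (\<lambda>i. node True l (p@[i])) [0..<length ts])"
        using homL[OF vR] lv rg_succs_pos[OF p(2)] lr(2) by auto
      have "(U G (\<phi> ?v) :: ('f,'v) trm) = Fun f (map (U G) (succs G (\<phi> ?v)))"
        using U_Fun[OF wf homV[OF vR] h(1)] .
      also have "map (U G) (succs G (\<phi> ?v)) = map (subst \<sigma>) ts"
      proof (rule nth_equalityI)
        show "length (map (U G) (succs G (\<phi> ?v))) = length (map (subst \<sigma>) ts)" using h(2) by simp
        fix i assume "i < length (map (U G) (succs G (\<phi> ?v)))"
        then have i: "i < length ts" using h(2) by simp
        have pi: "is_pos l (p@[i])" "subt_at l (p@[i]) = ts!i"
          using p i by (simp_all add: is_pos_append subt_at_append)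
        have "U G (\<phi> (node True l (p@[i]))) = subst \<sigma> (ts!i)" using Fun.IH[OF nth_mem[OF i]] pi by blast
        then show "map (U G) (succs G (\<phi> ?v)) ! i = map (subst \<sigma>) ts ! i" using h(2) i by simp
      qed
      finally show "U G (\<phi> ?v) = subst \<sigma> (Fun f ts)" by simp
    qed
  qed
  have l_pos: "is_pos l []" by simp
  have r0: "U G (\<phi> l0) = subst \<sigma> l" using key[of l] lr(3) by simp
  have l0V: "\<phi> l0 \<in> verts G" using homV inR[OF l_pos] lr(3) by simp
  have cterm: "is_cterm a is_con (\<sigma> x)" if xv: "x \<in> vars l" for x
  proof -
    obtain p where p: "is_pos l p" "subt_at l p = Var x" using vars_pos[OF xv] by blast
    have vR: "Inl x \<in> verts (restrict H l0)" using inR[OF p(1)] node_Var[OF p(2)] by simp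
    have "lab H (Inl x) = None" using lr(2) rg_lab_var by simp
    then have paths: "\<forall>vs. is_path G vs \<and> hd vs = \<phi> (Inl x) \<longrightarrow> constructor_path is_con G vs"
      using unl vR by blast
    have xV: "\<phi> (Inl x) \<in> verts G" using homV[OF vR] .
    have "\<forall>w. (\<phi> (Inl x), w) \<in> (edges G)\<^sup>* \<longrightarrow> (\<exists>c. lab G w = Some c \<and> is_con c)"
    proof (intro allI impI)
      fix w assume "(\<phi> (Inl x), w) \<in> (edges G)\<^sup>*"
      then obtain vs where vs: "is_path G vs" "hd vs = \<phi> (Inl x)" "last vs = w"
        using reach_path[OF wf _ xV] by blast
      have "w \<in> set vs" using vs(1,3) by (auto simp: is_path_def)
      then show "\<exists>c. lab G w = Some c \<and> is_con c" using paths vs by (auto simp: constructor_path_def)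
    qed
    then show ?thesis unfolding \<sigma>_def using U_cterm[OF wf cl xV] by blast
  qed
  have "term_redex a is_con R (U G (\<phi> l0) :: ('f,'v) trm)"
    unfolding term_redex_def using lr(1) r0 cterm by blast
  then show ?thesis using l0V by blast
qed

section \<open>Term redex to graph redex\<close>

fun follow :: "('n,'f,'z) lgraph_scheme \<Rightarrow> 'n \<Rightarrow> nat list \<Rightarrow> 'n" where
  "follow G u [] = u"
| "follow G u (i#p) = follow G (succs G u ! i) p"

lemma follow_append: "follow G u (p@[i]) = succs G (follow G u p) ! i"
  by (induction p arbitrary: u) auto

lemma follow_lemma:
  assumes wf: "wf_lgraph a G" and cl: "closed_graph G"
  shows "is_pos t p \<Longrightarrow> u \<in> verts G \<Longrightarrow> (U G u :: ('f,'v) trm) = subst \<sigma> t \<Longrightarrow>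
     follow G u p \<in> verts G \<and> (U G (follow G u p) :: ('f,'v) trm) = subst \<sigma> (subt_at t p)"
proof (induction p arbitrary: t u)
  case Nil then show ?case by simp
next
  case (Cons i p)
  obtain f ts where t: "t = Fun f ts" using Cons.prems(1) by (cases t) auto
  have i: "i < length ts" "is_pos (ts!i) p" using Cons.prems(1) t by auto
  obtain g where g: "lab G u = Some g" using closedD[OF cl Cons.prems(2)] by blast
  have "Fun g (map (U G) (succs G u)) = (Fun f (map (subst \<sigma>) ts) :: ('f,'v) trm)"
    by (metis U_Fun[OF wf Cons.prems(2) g] Cons.prems(3) t subst.simps(2))
  then have ms: "map (U G) (succs G u) = (map (subst \<sigma>) ts :: ('f,'v) trm list)" by simp
  then have len: "length (succs G u) = length ts" by (metis length_map)
  have ui: "(U G (succs G u ! i) :: ('f,'v) trm) = subst \<sigma> (ts!i)"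
    using arg_cong[OF ms, of "\<lambda>xs. xs!i"] i(1) len by simp
  have uV: "succs G u ! i \<in> verts G"
  proof -
    have "set (succs G u) \<subseteq> verts G" using wf Cons.prems(2) by (simp add: wf_lgraph_def)
    moreover have "succs G u ! i \<in> set (succs G u)" using i(1) len by simp
    ultimately show ?thesis by blast
  qed
  show ?case using Cons.IH[OF i(2) uV ui] t by simp
qed

lemma term_to_redex:
  fixes R :: "(('f, 'v) trm \<times> ('f, 'v) trm) set" and G :: "('n,'f,'z) lgraph_scheme"
  assumes wf: "wf_lgraph a G" and cl: "closed_graph G"
    and orth: "orthogonal R" and u: "u \<in> verts G"
    and red: "term_redex a is_con R (U G u :: ('f,'v) trm)"
  shows "graph_redex is_con (crs_to_grs R) G"
proof -
  obtain l r \<sigma> where lr: "(l,r) \<in> R" and cs: "\<forall>x \<in> vars l. is_cterm a is_con (\<sigma> x)"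
    and s: "(U G u :: ('f,'v) trm) = subst \<sigma> l"
    using red unfolding term_redex_def by blast
  have dl: "distinct (var_list l)" using orth lr unfolding orthogonal_def by blast
  define H where "H = rule_graph l r"
  define l0 where "l0 = node True l []"
  define \<phi> where "\<phi> = (\<lambda>v. case v of Inl x \<Rightarrow> follow G u (SOME p. is_pos l p \<and> subt_at l p = Var x)
                        | Inr (b::bool,p) \<Rightarrow> follow G u p)"
  have fol: "follow G u p \<in> verts G \<and> (U G (follow G u p) :: ('f,'v) trm) = subst \<sigma> (subt_at l p)"
    if "is_pos l p" for p
    using follow_lemma[OF wf cl that u s] .
  have phi: "\<phi> (node True l p) = follow G u p" if p: "is_pos l p" for p
  proof (cases "subt_at l p")
    case (Var x)
    have "(SOME q. is_pos l q \<and> subt_at l q = Var x) = p"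
    proof (rule some_equality)
      show "is_pos l p \<and> subt_at l p = Var x" using p Var by simp
      fix q assume "is_pos l q \<and> subt_at l q = Var x"
      then show "q = p" using var_pos_unique[OF dl] p Var by blast
    qed
    then show ?thesis using Var by (simp add: \<phi>_def node_Var)
  next
    case (Fun f ts) then show ?thesis by (simp add: \<phi>_def node_Fun)
  qed
  have restr: "\<exists>p. is_pos l p \<and> v = node True l p" if "v \<in> verts (restrict H l0)" for v
    using rg_reach_pos that unfolding restrict_def H_def l0_def by auto
  have hom: "is_hom (restrict H l0) G \<phi>"
    unfolding is_hom_def
  proof (rule conjI; intro ballI impI)
    fix v assume "v \<in> verts (restrict H l0)"
    then obtain p where p: "is_pos l p" "v = node True l p" using restr by blast
    show "\<phi> v \<in> verts G" using phi[OF p(1)] fol[OF p(1)] p(2) by simp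
  next
    fix v assume vR: "v \<in> verts (restrict H l0)" and ln: "lab (restrict H l0) v \<noteq> None"
    obtain p where p: "is_pos l p" "v = node True l p" using restr vR by blast
    obtain f ts where F: "subt_at l p = Fun f ts"
      using ln p rg_lab_var by (cases "subt_at l p") (auto simp: node_Var restrict_def H_def rg_lab_var)
    have lv: "lab (restrict H l0) v = Some f" using rg_lab_pos[OF p(1) F] p(2) by (simp add: restrict_def H_def)
    have sv: "succs (restrict H l0) v = map (\<lambda>i. node True l (p@[i])) [0..<length ts]"
      using rg_succs_pos[OF F] p(2) by (simp add: restrict_def H_def)
    have fV: "follow G u p \<in> verts G" and fU: "(U G (follow G u p) :: ('f,'v) trm) = Fun f (map (subst \<sigma>) ts)"
      using fol[OF p(1)] F by auto
    obtain g where g: "lab G (follow G u p) = Some g" using closedD[OF cl fV] by blast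
    have "Fun g (map (U G) (succs G (follow G u p))) = (Fun f (map (subst \<sigma>) ts) :: ('f,'v) trm)"
      by (metis U_Fun[OF wf fV g] fU)
    then have gf: "g = f" and ms: "map (U G) (succs G (follow G u p)) = (map (subst \<sigma>) ts :: ('f,'v) trm list)"
      by simp_all
    have len: "length (succs G (follow G u p)) = length ts" using ms by (metis length_map)
    show "lab G (\<phi> v) = lab (restrict H l0) v \<and> succs G (\<phi> v) = map \<phi> (succs (restrict H l0) v)"
    proof
      show "lab G (\<phi> v) = lab (restrict H l0) v" using lv g gf phi[OF p(1)] p(2) by simp
      show "succs G (\<phi> v) = map \<phi> (succs (restrict H l0) v)"
      proof (rule nth_equalityI)
        show "length (succs G (\<phi> v)) = length (map \<phi> (succs (restrict H l0) v))"
          using sv len phi[OF p(1)] p(2) by simp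
        fix i assume "i < length (succs G (\<phi> v))"
        then have i: "i < length ts" using len phi[OF p(1)] p(2) by simp
        have pi: "is_pos l (p@[i])" using p(1) F i by (simp add: is_pos_append)
        show "succs G (\<phi> v) ! i = map \<phi> (succs (restrict H l0) v) ! i"
          using sv i phi[OF pi] phi[OF p(1)] p(2) by (simp add: follow_append)
      qed
    qed
  qed
  have unl: "\<forall>v \<in> verts (restrict H l0). lab H v = None \<longrightarrow>
     (\<forall>vs. is_path G vs \<and> hd vs = \<phi> v \<longrightarrow> constructor_path is_con G vs)"
  proof (intro ballI impI allI)
    fix v vs assume vR: "v \<in> verts (restrict H l0)" and ln: "lab H v = None"
      and pth: "is_path G vs \<and> hd vs = \<phi> v"
    obtain p where p: "is_pos l p" "v = node True l p" using restr vR by blast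
    obtain x where X: "subt_at l p = Var x"
      using ln p rg_lab_pos[OF p(1)] by (cases "subt_at l p") (auto simp: H_def)
    have xl: "x \<in> vars l" using pos_vars[OF p(1) X] .
    have fV: "follow G u p \<in> verts G" and fU: "(U G (follow G u p) :: ('f,'v) trm) = \<sigma> x"
      using fol[OF p(1)] X by auto
    have hv: "hd vs = follow G u p" using pth phi[OF p(1)] p(2) by simp
    show "constructor_path is_con G vs" unfolding constructor_path_def
    proof
      fix w assume w: "w \<in> set vs"
      have wV: "w \<in> verts G" using pth w by (auto simp: is_path_def)
      have "(follow G u p, w) \<in> (edges G)\<^sup>*" using path_set_reach[of G vs w] pth w hv by simp
      then have "(U G w :: ('f,'v) trm) \<in> subterms (\<sigma> x)" using U_reach_sub[OF wf cl _ fV] fU by metis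
      then have ct: "is_cterm a is_con (U G w :: ('f,'v) trm)" using cterm_sub cs xl by blast
      obtain g where g: "lab G w = Some g" using closedD[OF cl wV] by blast
      have "is_con g" by (metis ct U_Fun[OF wf wV g] is_cterm.simps(2))
      then show "\<exists>c. lab G w = Some c \<and> is_con c" using g by blast
    qed
  qed
  have mem: "(H, l0, node False r []) \<in> crs_to_grs R"
    unfolding crs_to_grs_def graph_rule_of_def H_def l0_def using lr by force
  show ?thesis unfolding graph_redex_def
    by (rule bexI[OF _ mem]) (use hom unl in auto)
qed

theorem lemma11:
  fixes arity :: "'f \<Rightarrow> nat" and is_con :: "'f \<Rightarrow> bool"
    and R :: "(('f, 'v) trm \<times> ('f, 'v) trm) set"
    and G :: "('n, 'f) tgraph"
  assumes "constructor_trs arity is_con R"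
    and "orthogonal R"
    and "term_graph arity G"
    and "closed_graph G"
  shows "graph_nf is_con (crs_to_grs R) G \<longleftrightarrow> term_nf arity is_con R (term_of G :: ('f, 'v) trm)"
proof -
  have wf: "wf_lgraph arity G" and rootV: "root G \<in> verts G"
    and reach: "\<forall>v\<in>verts G. (root G, v) \<in> (edges G)\<^sup>*"
    using assms(3) by (auto simp: term_graph_def)
  have tU: "(term_of G :: ('f,'v) trm) = U G (root G)" using term_of_U[OF assms(3)] .
  show ?thesis
  proof
    assume gnf: "graph_nf is_con (crs_to_grs R) G"
    show "term_nf arity is_con R (term_of G :: ('f,'v) trm)"
      unfolding term_nf_def
    proof
      fix s assume "s \<in> subterms (term_of G :: ('f,'v) trm)"
      then obtain w where w: "(root G, w) \<in> (edges G)\<^sup>*" "s = U G w"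
        using sub_U[OF wf assms(4) _ rootV tU] by blast
      have wV: "w \<in> verts G" using rtrancl_verts[OF w(1) rootV wf] .
      show "\<not> term_redex arity is_con R s"
      proof
        assume "term_redex arity is_con R s"
        then have "graph_redex is_con (crs_to_grs R) G"
          using term_to_redex[OF wf assms(4) assms(2) wV] w(2) by simp
        then show False using gnf by (simp add: graph_nf_def)
      qed
    qed
  next
    assume tnf: "term_nf arity is_con R (term_of G :: ('f,'v) trm)"
    show "graph_nf is_con (crs_to_grs R) G"
      unfolding graph_nf_def
    proof
      assume "graph_redex is_con (crs_to_grs R) G"
      then obtain u where uV: "u \<in> verts G" and tr: "term_redex arity is_con R (U G u :: ('f,'v) trm)"
        using redex_to_term[OF wf assms(4)] by blast
      have "(U G u :: ('f,'v) trm) \<in> subterms (term_of G)"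
        using U_reach_sub[OF wf assms(4) _ rootV] reach uV tU by metis
      then show False using tnf tr by (auto simp: term_nf_def)
    qed
  qed
qed

end
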